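(* Let $G$ be a connected graph, let $u\in V(G)$ with set of neighbours $N_G(u)=\{p_1,\dots,p_n\}$, $n\ge 2$, where $u$ is joined to $p_i$ by $a_i\ge 1$ edges for each $i$. If $u$ is not a cut vertex, then with $H=G-u$, $$t(G)=\Big(\sum_{i=1}^n a_i\Big)t(H)+\sum_{\substack{S\subset N_G(u)\\ |S|\ge 2}}\Big(\prod_{i\in I_S}a_i\Big)t(H_S),$$ where $I_S$ is the set of indices of the vertices in $S$ and $H_S$ is the graph obtained from $H$ by identifying all vertices of $S$ into one vertex.
   Context: Graphs are finite and may have multiple edges and loops; $t(H)$ is the number of spanning trees of $H$. $G-u$ is the graph obtained from $G$ by deleting the vertex $u$ together with all edges incident to it. A cut vertex is a vertex whose deletion disconnects the graph. *)

theory Defs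
  imports Main
begin

text \<open>Finite multigraphs with possible loops: each edge has a set of ends of size 1 (loop) or 2.\<close>

record ('a, 'e) mgraph =
  verts :: "'a set"
  edges :: "'e set"
  ends  :: "'e \<Rightarrow> 'a set"

definition wf_mgraph :: "('a, 'e) mgraph \<Rightarrow> bool" where
  "wf_mgraph G \<longleftrightarrow> finite (verts G) \<and> finite (edges G) \<and>
     (\<forall>e \<in> edges G. ends G e \<subseteq> verts G \<and> 1 \<le> card (ends G e) \<and> card (ends G e) \<le> 2)"

definition adj_rel :: "('a, 'e) mgraph \<Rightarrow> 'e set \<Rightarrow> ('a \<times> 'a) set" where
  "adj_rel G F = {(x, y). \<exists>e \<in> F. ends G e = {x, y}}"

definition connected_on :: "('a, 'e) mgraph \<Rightarrow> 'a set \<Rightarrow> 'e set \<Rightarrow> bool" where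
  "connected_on G V F \<longleftrightarrow> V \<noteq> {} \<and> (\<forall>x \<in> V. \<forall>y \<in> V. (x, y) \<in> (adj_rel G F)\<^sup>*)"

definition connected :: "('a, 'e) mgraph \<Rightarrow> bool" where
  "connected G \<longleftrightarrow> connected_on G (verts G) (edges G)"

text \<open>Acyclic edge set: no edge lies on a cycle, i.e. every edge is a non-loop
  whose endpoints are not joined by a walk avoiding it.\<close>
definition acyclic_edges :: "('a, 'e) mgraph \<Rightarrow> 'e set \<Rightarrow> bool" where
  "acyclic_edges G F \<longleftrightarrow> (\<forall>e \<in> F. \<exists>x y. x \<noteq> y \<and> ends G e = {x, y} \<and>
       (x, y) \<notin> (adj_rel G (F - {e}))\<^sup>*)"

definition spanning_tree :: "('a, 'e) mgraph \<Rightarrow> 'e set \<Rightarrow> bool" where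
  "spanning_tree G T \<longleftrightarrow> T \<subseteq> edges G \<and> connected_on G (verts G) T \<and> acyclic_edges G T"

definition num_spanning_trees :: "('a, 'e) mgraph \<Rightarrow> nat" where
  "num_spanning_trees G = card {T. spanning_tree G T}"

definition delete_vertex :: "('a, 'e) mgraph \<Rightarrow> 'a \<Rightarrow> ('a, 'e) mgraph" where
  "delete_vertex G u = \<lparr>verts = verts G - {u}, edges = {e \<in> edges G. u \<notin> ends G e}, ends = ends G\<rparr>"

definition cut_vertex :: "('a, 'e) mgraph \<Rightarrow> 'a \<Rightarrow> bool" where
  "cut_vertex G u \<longleftrightarrow> u \<in> verts G \<and> connected G \<and> \<not> connected (delete_vertex G u)"

text \<open>Identify all vertices of S into one vertex (represented by a chosen element of S).
  Edges are kept; edges inside S become loops.\<close>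
definition identify :: "('a, 'e) mgraph \<Rightarrow> 'a set \<Rightarrow> ('a, 'e) mgraph" where
  "identify G S = (let s = (SOME x. x \<in> S); f = (\<lambda>v. if v \<in> S then s else v) in
     \<lparr>verts = f ` verts G, edges = edges G, ends = (\<lambda>e. f ` ends G e)\<rparr>)"

definition neighbours :: "('a, 'e) mgraph \<Rightarrow> 'a \<Rightarrow> 'a set" where
  "neighbours G u = {p. p \<noteq> u \<and> (\<exists>e \<in> edges G. ends G e = {u, p})}"

definition mult :: "('a, 'e) mgraph \<Rightarrow> 'a \<Rightarrow> 'a \<Rightarrow> nat" where
  "mult G u p = card {e \<in> edges G. ends G e = {u, p}}"

end

theory Submission
  imports Defs "HOL-Library.FuncSet"
begin

lemma adj_sym: "(x,y) \<in> adj_rel G F \<Longrightarrow> (y,x) \<in> adj_rel G F"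
  unfolding adj_rel_def by (auto simp: insert_commute)

lemma rt_sym: "(x,y) \<in> (adj_rel G F)\<^sup>* \<Longrightarrow> (y,x) \<in> (adj_rel G F)\<^sup>*"
proof (induction rule: rtrancl_induct)
  case base then show ?case by simp
next
  case (step y z) then show ?case by (meson adj_sym converse_rtrancl_into_rtrancl)
qed

lemma adj_mono: "F \<subseteq> F' \<Longrightarrow> (adj_rel G F)\<^sup>* \<subseteq> (adj_rel G F')\<^sup>*"
  by (rule rtrancl_mono) (auto simp: adj_rel_def)

lemma adj_edge: "e \<in> F \<Longrightarrow> ends G e = {x,y} \<Longrightarrow> (x,y) \<in> adj_rel G F"
  by (auto simp: adj_rel_def)

lemma closed_unreach:
  assumes "x \<in> C" "y \<notin> C" "\<And>a b. (a,b) \<in> R \<Longrightarrow> a \<in> C \<Longrightarrow> b \<in> C"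
  shows "(x,y) \<notin> R\<^sup>*"
proof
  assume "(x,y) \<in> R\<^sup>*" then have "y \<in> C" by induction (use assms in auto)
  with assms show False by simp
qed

lemma two_elems: "finite X \<Longrightarrow> card X \<le> 2 \<Longrightarrow> x \<in> X \<Longrightarrow> y \<in> X \<Longrightarrow> x \<noteq> y \<Longrightarrow> X = {x,y}"
  by (metis card_2_iff card_seteq empty_subsetI insert_subset)

lemma acyc_inj:
  assumes "acyclic_edges G T" "e1 \<in> T" "e2 \<in> T" "ends G e1 = ends G e2"
  shows "e1 = e2"
proof (rule ccontr)
  assume ne: "e1 \<noteq> e2"
  from assms(1,2) obtain x y where "x \<noteq> y" "ends G e1 = {x,y}" "(x,y) \<notin> (adj_rel G (T - {e1}))\<^sup>*"
    unfolding acyclic_edges_def by blast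
  moreover have "(x,y) \<in> adj_rel G (T - {e1})"
    using ne assms(3,4) calculation(2) by (intro adj_edge[of e2]) auto
  ultimately show False by blast
qed

lemma acyc_ends:
  assumes "acyclic_edges G T" "e \<in> T"
  shows "\<exists>x y. x \<noteq> y \<and> ends G e = {x,y}"
  using assms unfolding acyclic_edges_def by blast

definition nbT :: "('a,'e) mgraph \<Rightarrow> 'a \<Rightarrow> 'e set \<Rightarrow> 'a set" where
  "nbT G u T = {p \<in> neighbours G u. \<exists>e\<in>T. ends G e = {u,p}}"

locale L =
  fixes G :: "('a,'e) mgraph" and u :: 'a and S :: "'a set"
  assumes wf: "wf_mgraph G" and uV: "u \<in> verts G" and SN: "S \<subseteq> neighbours G u" and Sne: "S \<noteq> {}"
begin

definition s where "s = (SOME x. x \<in> S)"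
definition f where "f v = (if v \<in> S then s else v)"
definition HS where "HS = identify (delete_vertex G u) S"

lemma s_in: "s \<in> S" unfolding s_def using Sne by (simp add: some_in_eq)

lemma HS_simps: "verts HS = f ` (verts G - {u})" "edges HS = {e \<in> edges G. u \<notin> ends G e}"
  "ends HS = (\<lambda>e. f ` ends G e)"
  unfolding HS_def identify_def delete_vertex_def f_def[abs_def] s_def Let_def by auto

lemma f_s[simp]: "f s = s" using s_in f_def by simp
lemma f_S: "x \<in> S \<Longrightarrow> f x = s" by (simp add: f_def)
lemma f_nS: "x \<notin> S \<Longrightarrow> f x = x" by (simp add: f_def)

lemma ends_ok: "e \<in> edges G \<Longrightarrow> ends G e \<subseteq> verts G \<and> finite (ends G e) \<and> card (ends G e) \<le> 2 \<and> ends G e \<noteq> {}"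
  using wf unfolding wf_mgraph_def by (metis card.infinite card_0_eq not_one_le_zero rev_finite_subset)

lemma S_sub: "S \<subseteq> verts G - {u}"
  using SN ends_ok unfolding neighbours_def by blast

lemma u_nS: "u \<notin> S" using S_sub by blast

lemma fu: "f u = u" using u_nS f_nS by simp


lemma base_lift:
  assumes D: "\<forall>p\<in>S. \<exists>e\<in>D. ends G e = {u,p}" and eq: "f x = f y"
  shows "(x,y) \<in> (adj_rel G D)\<^sup>*"
proof (cases "x \<in> S")
  case True
  then have yS: "y \<in> S" using eq s_in by (cases "y \<in> S") (auto simp: f_def)
  obtain e1 where "e1 \<in> D" "ends G e1 = {x,u}" using D True by (auto simp: insert_commute)
  then have "(x,u) \<in> adj_rel G D" by (rule adj_edge)
  moreover obtain e2 where "e2 \<in> D" "ends G e2 = {u,y}" using D yS by auto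
  then have "(u,y) \<in> adj_rel G D" by (rule adj_edge)
  ultimately show ?thesis by auto
next
  case False
  then have "y \<notin> S" using eq s_in by (cases "y \<in> S") (auto simp: f_def)
  then show ?thesis using False eq by (simp add: f_def)
qed

lemma lift:
  assumes D: "\<forall>p\<in>S. \<exists>e\<in>D. ends G e = {u,p}" and F': "F' \<subseteq> edges G"
    and ab: "(a,b) \<in> (adj_rel HS F')\<^sup>*"
  shows "\<forall>x y. f x = a \<longrightarrow> f y = b \<longrightarrow> (x,y) \<in> (adj_rel G (F' \<union> D))\<^sup>*"
  using ab
proof (induction rule: rtrancl_induct)
  case base
  then show ?case using base_lift[OF D] adj_mono[of D "F' \<union> D" G] by blast
next
  case (step b c)
  show ?case
  proof (intro allI impI)
    fix x z assume fx: "f x = a" and fz: "f z = c"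
    obtain e where e: "e \<in> F'" "f ` ends G e = {b,c}"
      using step(2) unfolding adj_rel_def HS_simps by auto
    have bc: "b \<in> f ` ends G e" "c \<in> f ` ends G e" using e(2) by auto
    obtain y' where y': "y' \<in> ends G e" "f y' = b" using bc(1) by blast
    obtain z' where z': "z' \<in> ends G e" "f z' = c" using bc(2) by blast
    have 1: "(x,y') \<in> (adj_rel G (F' \<union> D))\<^sup>*" using step(3) fx y'(2) by blast
    have 2: "(y',z') \<in> (adj_rel G (F' \<union> D))\<^sup>*"
    proof (cases "y' = z'")
      case False
      have eG: "e \<in> edges G" using F' e(1) by blast
      have "finite (ends G e)" "card (ends G e) \<le> 2" using ends_ok[OF eG] by auto
      then have "ends G e = {y',z'}" using y'(1) z'(1) False by (rule two_elems)
      then have "(y',z') \<in> adj_rel G (F' \<union> D)" using e(1) by (intro adj_edge[of e]) auto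
      then show ?thesis by auto
    qed simp
    have ff: "f z' = f z" using z'(2) fz by simp
    have "(z',z) \<in> (adj_rel G D)\<^sup>*" using ff by (rule base_lift[OF assms(1)])
    then have 3: "(z',z) \<in> (adj_rel G (F' \<union> D))\<^sup>*"
      using adj_mono[of D "F' \<union> D" G] by blast
    show "(x,z) \<in> (adj_rel G (F' \<union> D))\<^sup>*" using 1 2 3 by (meson rtrancl_trans)
  qed
qed


lemma T_edges_u:
  assumes st: "spanning_tree G T" and nb: "nbT G u T = S" and e: "e \<in> T" "u \<in> ends G e"
  shows "\<exists>p\<in>S. ends G e = {u,p} \<and> p \<noteq> u"
proof -
  have acyc: "acyclic_edges G T" and TG: "T \<subseteq> edges G" using st unfolding spanning_tree_def by auto
  obtain x y where xy: "x \<noteq> y" "ends G e = {x,y}" using acyc_ends[OF acyc e(1)] by blast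
  define p where "p = (if x = u then y else x)"
  have ep: "ends G e = {u,p}" "p \<noteq> u" using xy e(2) unfolding p_def by auto
  have "p \<in> neighbours G u" unfolding neighbours_def using ep e(1) TG by auto
  then have "p \<in> S" using nb ep e(1) unfolding nbT_def by auto
  then show ?thesis using ep by blast
qed

lemma F_tree:
  assumes st: "spanning_tree G T" and nb: "nbT G u T = S"
  shows "spanning_tree HS {e \<in> T. u \<notin> ends G e}"
proof -
  define F where "F = {e \<in> T. u \<notin> ends G e}"
  define D where "D = {e \<in> T. u \<in> ends G e}"
  have acyc: "acyclic_edges G T" and TG: "T \<subseteq> edges G" and conn: "connected_on G (verts G) T"
    using st unfolding spanning_tree_def by auto
  have Dp: "\<forall>p\<in>S. \<exists>e\<in>D. ends G e = {u,p}" using nb unfolding nbT_def D_def by auto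
  have sub: "F \<subseteq> edges HS" using TG unfolding F_def HS_simps by auto
  have key: "v = u \<or> (f v, s) \<in> (adj_rel HS F)\<^sup>*" if "(v,u) \<in> (adj_rel G T)\<^sup>*" for v
    using that
  proof (induction rule: converse_rtrancl_induct)
    case base then show ?case by simp
  next
    case (step v w)
    obtain e where e: "e \<in> T" "ends G e = {v,w}" using step(1) unfolding adj_rel_def by auto
    show ?case
    proof (cases "v = u")
      case False
      show ?thesis
      proof (cases "w = u")
        case True
        obtain p where p: "p \<in> S" "ends G e = {u,p}" "p \<noteq> u"
          using T_edges_u[OF st nb e(1)] e(2) True by auto
        have "v = p" using p e(2) True False by (auto simp: doubleton_eq_iff)
        then show ?thesis using p f_S by simp
      next
        case wu: False
        have "e \<in> F" using e False wu unfolding F_def by auto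
        moreover have "ends HS e = {f v, f w}" using e(2) unfolding HS_simps by auto
        ultimately have "(f v, f w) \<in> adj_rel HS F" by (rule adj_edge)
        then show ?thesis using step(3) wu by (meson converse_rtrancl_into_rtrancl)
      qed
    qed simp
  qed
  have toS: "(f x, s) \<in> (adj_rel HS F)\<^sup>*" if "x \<in> verts G - {u}" for x
  proof -
    have "(x,u) \<in> (adj_rel G T)\<^sup>*" using conn that uV unfolding connected_on_def by auto
    then show ?thesis using key that by auto
  qed
  have connHS: "connected_on HS (verts HS) F"
    unfolding connected_on_def
  proof (intro conjI ballI)
    show "verts HS \<noteq> {}" using S_sub s_in unfolding HS_simps by auto
  next
    fix a b assume "a \<in> verts HS" "b \<in> verts HS"
    then obtain x y where "x \<in> verts G - {u}" "y \<in> verts G - {u}" "a = f x" "b = f y"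
      unfolding HS_simps by auto
    then show "(a,b) \<in> (adj_rel HS F)\<^sup>*" using toS rt_sym by (meson rtrancl_trans)
  qed
  have acycHS: "acyclic_edges HS F"
    unfolding acyclic_edges_def
  proof
    fix e assume eF: "e \<in> F"
    then have eT: "e \<in> T" and ue: "u \<notin> ends G e" unfolding F_def by auto
    obtain x y where xy: "x \<noteq> y" "ends G e = {x,y}" "(x,y) \<notin> (adj_rel G (T - {e}))\<^sup>*"
      using acyc eT unfolding acyclic_edges_def by blast
    have nr: "(f x, f y) \<notin> (adj_rel HS (F - {e}))\<^sup>*"
    proof
      assume "(f x, f y) \<in> (adj_rel HS (F - {e}))\<^sup>*"
      moreover have "F - {e} \<subseteq> edges G" using TG unfolding F_def by auto
      ultimately have "(x,y) \<in> (adj_rel G ((F - {e}) \<union> D))\<^sup>*"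
        using lift[OF Dp] by blast
      moreover have "(F - {e}) \<union> D \<subseteq> T - {e}" using ue unfolding F_def D_def by auto
      ultimately show False using xy(3) adj_mono by blast
    qed
    then have "f x \<noteq> f y" by auto
    moreover have "ends HS e = {f x, f y}" using xy(2) unfolding HS_simps by auto
    ultimately show "\<exists>a b. a \<noteq> b \<and> ends HS e = {a, b} \<and> (a, b) \<notin> (adj_rel HS (F - {e}))\<^sup>*"
      using nr by blast
  qed
  show ?thesis unfolding spanning_tree_def F_def[symmetric] using sub connHS acycHS by blast
qed


lemma T_tree:
  assumes g: "g \<in> (\<Pi>\<^sub>E p\<in>S. {e \<in> edges G. ends G e = {u,p}})" and Ft: "spanning_tree HS F"
  shows "spanning_tree G (g ` S \<union> F) \<and> nbT G u (g ` S \<union> F) = S"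
proof -
  define T where "T = g ` S \<union> F"
  have gp: "g p \<in> edges G" "ends G (g p) = {u,p}" if "p \<in> S" for p using g that by auto
  have pu: "p \<noteq> u" if "p \<in> S" for p using that u_nS by auto
  have FHS: "F \<subseteq> edges HS" and connF: "connected_on HS (verts HS) F" and acycF: "acyclic_edges HS F"
    using Ft unfolding spanning_tree_def by auto
  have FG: "F \<subseteq> edges G" and Fu: "\<And>e. e \<in> F \<Longrightarrow> u \<notin> ends G e" using FHS unfolding HS_simps by auto
  have TG: "T \<subseteq> edges G" using gp FG unfolding T_def by auto
  have nb: "nbT G u T = S"
  proof
    show "nbT G u T \<subseteq> S"
    proof
      fix p assume "p \<in> nbT G u T"
      then obtain e where p: "p \<in> neighbours G u" "e \<in> T" "ends G e = {u,p}" unfolding nbT_def by auto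
      have "p \<noteq> u" using p(1) unfolding neighbours_def by auto
      have "e \<notin> F" using Fu p(3) by auto
      then obtain q where "q \<in> S" "e = g q" using p(2) unfolding T_def by auto
      then show "p \<in> S" using gp p(3) pu \<open>p \<noteq> u\<close> by (auto simp: doubleton_eq_iff)
    qed
  next
    show "S \<subseteq> nbT G u T" unfolding nbT_def T_def
    proof
      fix p assume p: "p \<in> S"
      have "g p \<in> g ` S \<union> F" "ends G (g p) = {u,p}" using p gp by auto
      then show "p \<in> {p \<in> neighbours G u. \<exists>e\<in>g ` S \<union> F. ends G e = {u, p}}" using SN p by blast
    qed
  qed
  have Dp: "\<forall>p\<in>S. \<exists>e\<in>g ` S. ends G e = {u,p}" using gp by auto
  have connT: "connected_on G (verts G) T"
  proof -
    have tou: "(x,u) \<in> (adj_rel G T)\<^sup>*" if "x \<in> verts G" for x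
    proof (cases "x = u")
      case False
      have "f x \<in> verts HS" using that False unfolding HS_simps by auto
      moreover have "f s \<in> verts HS" unfolding HS_simps using S_sub s_in by (intro imageI) auto
      ultimately have "(f x, f s) \<in> (adj_rel HS F)\<^sup>*" using connF unfolding connected_on_def by auto
      then have "(x, s) \<in> (adj_rel G (F \<union> g ` S))\<^sup>*" using lift[OF Dp FG] by blast
      then have 1: "(x, s) \<in> (adj_rel G T)\<^sup>*" unfolding T_def by (simp add: Un_commute)
      have "(s,u) \<in> adj_rel G T" using gp[OF s_in] s_in unfolding T_def
        by (intro adj_edge[of "g s"]) (auto simp: insert_commute)
      then show ?thesis using 1 by auto
    qed simp
    show ?thesis unfolding connected_on_def
    proof (intro conjI ballI)
      show "verts G \<noteq> {}" using uV by auto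
    next
      fix a b assume "a \<in> verts G" "b \<in> verts G"
      then have "(a,u) \<in> (adj_rel G T)\<^sup>*" "(u,b) \<in> (adj_rel G T)\<^sup>*" using tou rt_sym[OF tou] by auto
      then show "(a,b) \<in> (adj_rel G T)\<^sup>*" by (rule rtrancl_trans)
    qed
  qed
  have acycT: "acyclic_edges G T"
    unfolding acyclic_edges_def
  proof
    fix e assume eT: "e \<in> T"
    show "\<exists>x y. x \<noteq> y \<and> ends G e = {x, y} \<and> (x, y) \<notin> (adj_rel G (T - {e}))\<^sup>*"
    proof (cases "e \<in> F")
      case True
      define R where "R = adj_rel HS (F - {e})"
      obtain a b where ab: "a \<noteq> b" "ends HS e = {a,b}" "(a,b) \<notin> R\<^sup>*"
        using acycF True unfolding acyclic_edges_def R_def by blast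
      have bc: "a \<in> f ` ends G e" "b \<in> f ` ends G e" using ab(2) unfolding HS_simps by auto
      obtain x where x: "x \<in> ends G e" "f x = a" using bc(1) by blast
      obtain y where y: "y \<in> ends G e" "f y = b" using bc(2) by blast
      have xy: "x \<noteq> y" using x y ab(1) by auto
      have eG: "e \<in> edges G" using FG True by auto
      have "finite (ends G e)" "card (ends G e) \<le> 2" using ends_ok[OF eG] by auto
      then have exy: "ends G e = {x,y}" using x(1) y(1) xy by (rule two_elems)
      have xu: "x \<noteq> u" "y \<noteq> u" using Fu[OF True] x y by auto
      define C where "C = {z. z \<noteq> u \<and> (a, f z) \<in> R\<^sup>*} \<union> {z. z = u \<and> (a, s) \<in> R\<^sup>*}"
      have "(x,y) \<notin> (adj_rel G (T - {e}))\<^sup>*"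
      proof (rule closed_unreach[of x C])
        show "x \<in> C" using xu x unfolding C_def by auto
        show "y \<notin> C" using xu y ab(3) unfolding C_def by auto
      next
        fix z1 z2 assume z: "(z1,z2) \<in> adj_rel G (T - {e})" "z1 \<in> C"
        then obtain e' where e': "e' \<in> T" "e' \<noteq> e" "ends G e' = {z1,z2}" unfolding adj_rel_def by auto
        show "z2 \<in> C"
        proof (cases "e' \<in> F")
          case True
          have "z1 \<noteq> u" "z2 \<noteq> u" using Fu[OF True] e'(3) by auto
          moreover have "(f z1, f z2) \<in> R" unfolding R_def
            using True e' by (intro adj_edge[of e']) (auto simp: HS_simps)
          ultimately show ?thesis using z(2) unfolding C_def by (auto intro: rtrancl_into_rtrancl)
        next
          case False
          then obtain q where q: "q \<in> S" "e' = g q" using e'(1) unfolding T_def by auto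
          have "{z1,z2} = {u,q}" using gp[OF q(1)] q(2) e'(3) by simp
          then show ?thesis using z(2) pu[OF q(1)] f_S[OF q(1)] unfolding C_def
            by (auto simp: doubleton_eq_iff)
        qed
      qed
      then show ?thesis using xy exy by blast
    next
      case False
      then obtain p where p: "p \<in> S" "e = g p" using eT unfolding T_def by auto
      define C where "C = {p} \<union> {z. z \<notin> S \<and> z \<noteq> u \<and> (\<exists>e0\<in>F. \<exists>w. ends G e0 = {p,w} \<and> w \<notin> S \<and>
                                   (z, w) \<in> (adj_rel HS (F - {e0}))\<^sup>*)}"
      have "(p,u) \<notin> (adj_rel G (T - {e}))\<^sup>*"
      proof (rule closed_unreach[of p C])
        show "p \<in> C" unfolding C_def by auto
        show "u \<notin> C" unfolding C_def using pu[OF p(1)] by auto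
      next
        fix z1 z2 assume z: "(z1,z2) \<in> adj_rel G (T - {e})" "z1 \<in> C"
        then obtain e' where e': "e' \<in> T" "e' \<noteq> e" "ends G e' = {z1,z2}" unfolding adj_rel_def by auto
        show "z2 \<in> C"
        proof (cases "e' \<in> F")
          case False
          then obtain q where q: "q \<in> S" "e' = g q" using e'(1) unfolding T_def by auto
          have "q \<noteq> p" using q p e'(2) by auto
          have "{z1,z2} = {u,q}" using gp[OF q(1)] q(2) e'(3) by simp
          then have "z1 = u \<or> z1 = q" by (auto simp: doubleton_eq_iff)
          then show ?thesis using z(2) q(1) \<open>q \<noteq> p\<close> pu[OF p(1)] unfolding C_def by auto
        next
          case True
          have z12u: "z1 \<noteq> u" "z2 \<noteq> u" using Fu[OF True] e'(3) by auto
          have eHS: "ends HS e' = {f z1, f z2}" using e'(3) unfolding HS_simps by auto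
          have fne: "f z1 \<noteq> f z2"
          proof
            assume "f z1 = f z2"
            moreover obtain a b where "a \<noteq> b" "ends HS e' = {a,b}"
              using acycF True unfolding acyclic_edges_def by blast
            ultimately show False using eHS by (auto simp: doubleton_eq_iff)
          qed
          show ?thesis
          proof (cases "z1 = p")
            case True
            then have "z2 \<notin> S" using fne f_S p(1) by (metis)
            moreover have "ends G e' = {p, z2}" using e'(3) True by simp
            ultimately show ?thesis using \<open>e' \<in> F\<close> z12u unfolding C_def by blast
          next
            case False
            then obtain e0 w where z1: "z1 \<notin> S" "e0 \<in> F" "ends G e0 = {p,w}" "w \<notin> S"
              "(z1, w) \<in> (adj_rel HS (F - {e0}))\<^sup>*" using z(2) unfolding C_def by auto
            show ?thesis
            proof (cases "z2 \<in> S")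
              case True
              show ?thesis
              proof (rule ccontr)
                assume "z2 \<notin> C"
                then have "z2 \<noteq> p" unfolding C_def by auto
                have "e' \<noteq> e0" using e'(3) z1(3) z1(4) True \<open>z2 \<noteq> p\<close> by (auto simp: doubleton_eq_iff)
                then have "(f z2, f z1) \<in> adj_rel HS (F - {e0})" using \<open>e' \<in> F\<close> eHS
                  by (intro adj_edge[of e']) (auto simp: insert_commute)
                then have "(s, w) \<in> (adj_rel HS (F - {e0}))\<^sup>*"
                  using z1(1,5) f_S[OF True] f_nS by (auto intro: converse_rtrancl_into_rtrancl)
                moreover have "ends HS e0 = {s, w}" using z1(3,4) f_S[OF p(1)] f_nS unfolding HS_simps by auto
                moreover obtain a b where "a \<noteq> b" "ends HS e0 = {a,b}" "(a,b) \<notin> (adj_rel HS (F - {e0}))\<^sup>*"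
                  using acycF z1(2) unfolding acyclic_edges_def by blast
                ultimately show False using rt_sym by (metis doubleton_eq_iff)
              qed
            next
              case False
              have "e' \<noteq> e0" using e'(3) z1(1,3) False p(1) by (auto simp: doubleton_eq_iff)
              then have "(f z2, f z1) \<in> adj_rel HS (F - {e0})" using \<open>e' \<in> F\<close> eHS
                by (intro adj_edge[of e']) (auto simp: insert_commute)
              then have "(z2, w) \<in> (adj_rel HS (F - {e0}))\<^sup>*"
                using z1(1,5) False f_nS by (auto intro: converse_rtrancl_into_rtrancl)
              then show ?thesis using False z12u z1 unfolding C_def by blast
            qed
          qed
        qed
      qed
      then have nr: "(u,p) \<notin> (adj_rel G (T - {e}))\<^sup>*" using rt_sym[of u p] by blast
      have "ends G e = {u,p}" using gp p by simp
      then show ?thesis using pu[OF p(1)] nr by (intro exI[of _ u] exI[of _ p]) auto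
    qed
  qed
  show ?thesis using TG connT acycT nb unfolding spanning_tree_def T_def by blast
qed


lemma cls_card:
  "card {T. spanning_tree G T \<and> nbT G u T = S} = (\<Prod>p\<in>S. mult G u p) * num_spanning_trees HS"
proof -
  define A where "A = (\<Pi>\<^sub>E p\<in>S. {e \<in> edges G. ends G e = {u,p}})"
  define Tr where "Tr = {F. spanning_tree HS F}"
  define \<Phi> where "\<Phi> = (\<lambda>(g::'a \<Rightarrow> 'e, F). g ` S \<union> F)"
  have img: "{T. spanning_tree G T \<and> nbT G u T = S} = \<Phi> ` (A \<times> Tr)"
  proof
    show "\<Phi> ` (A \<times> Tr) \<subseteq> {T. spanning_tree G T \<and> nbT G u T = S}"
      using T_tree unfolding \<Phi>_def A_def Tr_def by auto
  next
    show "{T. spanning_tree G T \<and> nbT G u T = S} \<subseteq> \<Phi> ` (A \<times> Tr)"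
    proof
      fix T assume "T \<in> {T. spanning_tree G T \<and> nbT G u T = S}"
      then have st: "spanning_tree G T" and nb: "nbT G u T = S" by auto
      have TG: "T \<subseteq> edges G" and acyc: "acyclic_edges G T" using st unfolding spanning_tree_def by auto
      define g where "g = restrict (\<lambda>p. SOME e. e \<in> T \<and> ends G e = {u,p}) S"
      define F where "F = {e \<in> T. u \<notin> ends G e}"
      have gp: "g p \<in> T \<and> ends G (g p) = {u,p}" if "p \<in> S" for p
      proof -
        have "\<exists>e. e \<in> T \<and> ends G e = {u,p}" using that nb unfolding nbT_def by auto
        then have "(SOME e. e \<in> T \<and> ends G e = {u,p}) \<in> T \<and> ends G (SOME e. e \<in> T \<and> ends G e = {u,p}) = {u,p}"
          by (rule someI_ex)
        then show ?thesis using that unfolding g_def by simp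
      qed
      have gA: "g \<in> A" unfolding A_def g_def using gp TG unfolding g_def by auto
      have FT: "F \<in> Tr" unfolding Tr_def F_def using F_tree[OF st nb] by simp
      have "T = g ` S \<union> F"
      proof
        show "g ` S \<union> F \<subseteq> T" using gp unfolding F_def by auto
      next
        show "T \<subseteq> g ` S \<union> F"
        proof
          fix e assume eT: "e \<in> T"
          show "e \<in> g ` S \<union> F"
          proof (cases "u \<in> ends G e")
            case True
            obtain p where p: "p \<in> S" "ends G e = {u,p}" using T_edges_u[OF st nb eT True] by blast
            have "e = g p" using acyc_inj[OF acyc eT] gp[OF p(1)] p(2) by auto
            then show ?thesis using p(1) by blast
          qed (use eT F_def in auto)
        qed
      qed
      then show "T \<in> \<Phi> ` (A \<times> Tr)" unfolding \<Phi>_def using gA FT by force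
    qed
  qed
  have inj: "inj_on \<Phi> (A \<times> Tr)"
  proof (rule inj_onI)
    fix x y assume x: "x \<in> A \<times> Tr" and y: "y \<in> A \<times> Tr" and eq: "\<Phi> x = \<Phi> y"
    obtain g1 F1 where x': "x = (g1,F1)" by force
    obtain g2 F2 where y': "y = (g2,F2)" by force
    have g1: "g1 \<in> A" "F1 \<in> Tr" and g2: "g2 \<in> A" "F2 \<in> Tr" using x y x' y' by auto
    have eq': "g1 ` S \<union> F1 = g2 ` S \<union> F2" using eq x' y' unfolding \<Phi>_def by simp
    have Fu: "u \<notin> ends G e" if "e \<in> F1 \<union> F2" for e
      using that g1(2) g2(2) unfolding Tr_def spanning_tree_def HS_simps by auto
    have gp: "h p \<in> edges G \<and> ends G (h p) = {u,p}" if "h \<in> A" "p \<in> S" for h p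
      using that unfolding A_def by auto
    have pu: "p \<noteq> u" if "p \<in> S" for p using that u_nS by auto
    have F12: "F1 = F2"
    proof -
      have "F1 = {e \<in> g1 ` S \<union> F1. u \<notin> ends G e}" using Fu gp[OF g1(1)] by auto
      also have "\<dots> = {e \<in> g2 ` S \<union> F2. u \<notin> ends G e}" using eq' by simp
      also have "\<dots> = F2" using Fu gp[OF g2(1)] by auto
      finally show ?thesis .
    qed
    have "g1 = g2"
    proof (rule PiE_ext[OF g1(1)[unfolded A_def] g2(1)[unfolded A_def]])
      fix p assume p: "p \<in> S"
      have "g1 p \<in> g2 ` S \<union> F2" using eq' p by blast
      moreover have "g1 p \<notin> F2" using Fu gp[OF g1(1) p] by auto
      ultimately obtain q where q: "q \<in> S" "g1 p = g2 q" by auto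
      have "{u,p} = {u,q}" using gp[OF g1(1) p] gp[OF g2(1) q(1)] q(2) by simp
      then have "p = q" using pu p q(1) by (auto simp: doubleton_eq_iff)
      then show "g1 p = g2 p" using q by simp
    qed
    then show "x = y" using x' y' F12 by simp
  qed
  have finS: "finite S" using S_sub wf unfolding wf_mgraph_def by (meson finite_Diff finite_subset)
  have "card {T. spanning_tree G T \<and> nbT G u T = S} = card A * card Tr"
    unfolding img card_image[OF inj] card_cartesian_product ..
  also have "card A = (\<Prod>p\<in>S. mult G u p)" unfolding A_def card_PiE[OF finS] mult_def ..
  finally show ?thesis unfolding num_spanning_trees_def Tr_def .
qed

end

lemma identify_single: "identify H {p} = H"
proof -
  have e: "(\<lambda>v. if v \<in> {p} then (SOME x. x \<in> {p}) else v) = (\<lambda>v. v)" by auto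
  show ?thesis unfolding identify_def Let_def e by (cases H) simp
qed

lemma nbT_nonempty:
  assumes st: "spanning_tree G T" and wf: "wf_mgraph G" and uV: "u \<in> verts G"
    and N: "neighbours G u \<noteq> {}"
  shows "nbT G u T \<noteq> {}"
proof -
  have TG: "T \<subseteq> edges G" and acyc: "acyclic_edges G T" and conn: "connected_on G (verts G) T"
    using st unfolding spanning_tree_def by auto
  obtain p where p: "p \<in> neighbours G u" using N by blast
  then have "p \<noteq> u" "p \<in> verts G" using wf unfolding neighbours_def wf_mgraph_def by auto
  then have "(u,p) \<in> (adj_rel G T)\<^sup>*" using conn uV unfolding connected_on_def by auto
  then obtain z where "(u,z) \<in> adj_rel G T" using \<open>p \<noteq> u\<close> by (metis converse_rtranclE)
  then obtain e where e: "e \<in> T" "ends G e = {u,z}" unfolding adj_rel_def by auto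
  obtain x y where "x \<noteq> y" "ends G e = {x,y}" using acyc_ends[OF acyc e(1)] by blast
  then have "z \<noteq> u" using e(2) by (auto simp: doubleton_eq_iff)
  then have "z \<in> neighbours G u" unfolding neighbours_def using e TG by auto
  then show ?thesis unfolding nbT_def using e by auto
qed

theorem theorem5p8:
  fixes G :: "('a, 'e) mgraph" and u :: 'a
  assumes "wf_mgraph G"
    and "connected G"
    and "u \<in> verts G"
    and "card (neighbours G u) \<ge> 2"
    and "\<not> cut_vertex G u"
  shows "num_spanning_trees G =
     (\<Sum>p \<in> neighbours G u. mult G u p) * num_spanning_trees (delete_vertex G u)
     + (\<Sum>S \<in> {S. S \<subseteq> neighbours G u \<and> card S \<ge> 2}.
          (\<Prod>p \<in> S. mult G u p) * num_spanning_trees (identify (delete_vertex G u) S))"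
proof -
  define N where "N = neighbours G u"
  define P where "P = {S. S \<subseteq> N \<and> S \<noteq> {}}"
  define P2 where "P2 = {S. S \<subseteq> N \<and> card S \<ge> 2}"
  define cls where "cls S = {T. spanning_tree G T \<and> nbT G u T = S}" for S
  define h where "h S = (\<Prod>p \<in> S. mult G u p) * num_spanning_trees (identify (delete_vertex G u) S)" for S
  have finN: "finite N" using assms(1) unfolding N_def neighbours_def wf_mgraph_def
    by (rule_tac finite_subset[of _ "verts G"]) auto
  have Nne: "N \<noteq> {}" using assms(4) unfolding N_def by auto
  have finP: "finite P" unfolding P_def using finN by auto
  have finE: "finite (edges G)" using assms(1) unfolding wf_mgraph_def by auto
  have all: "{T. spanning_tree G T} = (\<Union>S\<in>P. cls S)"
  proof
    show "{T. spanning_tree G T} \<subseteq> (\<Union>S\<in>P. cls S)"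
    proof
      fix T assume "T \<in> {T. spanning_tree G T}"
      then have st: "spanning_tree G T" by simp
      have "nbT G u T \<in> P" using nbT_nonempty[OF st assms(1,3)] Nne
        unfolding P_def N_def nbT_def by auto
      then show "T \<in> (\<Union>S\<in>P. cls S)" using st unfolding cls_def by auto
    qed
  qed (auto simp: cls_def)
  have fincls: "finite (cls S)" for S
  proof (rule finite_subset[of _ "Pow (edges G)"])
    show "cls S \<subseteq> Pow (edges G)" unfolding cls_def spanning_tree_def by auto
  qed (use finE in simp)
  have "num_spanning_trees G = (\<Sum>S\<in>P. card (cls S))"
    unfolding num_spanning_trees_def all
    by (rule card_UN_disjoint[OF finP]) (auto simp: fincls[unfolded cls_def] cls_def)
  also have "\<dots> = (\<Sum>S\<in>P. h S)"
  proof (rule sum.cong[OF refl])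
    fix S assume "S \<in> P"
    then interpret L G u S using assms(1,3) unfolding P_def N_def by unfold_locales auto
    show "card (cls S) = h S" unfolding cls_def h_def using cls_card unfolding HS_def .
  qed
  also have "P = P2 \<union> (\<lambda>p. {p}) ` N"
    unfolding P_def P2_def
  proof (intro set_eqI iffI)
    fix S assume "S \<in> {S. S \<subseteq> N \<and> S \<noteq> {}}"
    then have S: "S \<subseteq> N" "S \<noteq> {}" by auto
    have "finite S" using S finN finite_subset by blast
    then have "card S \<ge> 1" using S(2) by (simp add: Suc_leI card_gt_0_iff)
    then show "S \<in> {S. S \<subseteq> N \<and> 2 \<le> card S} \<union> (\<lambda>p. {p}) ` N"
    proof (cases "card S = 1")
      case True
      then obtain x where "S = {x}" by (auto simp: card_1_singleton_iff)
      then show ?thesis using S by auto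
    next
      case False
      then show ?thesis using S \<open>card S \<ge> 1\<close> by auto
    qed
  next
    fix S assume "S \<in> {S. S \<subseteq> N \<and> 2 \<le> card S} \<union> (\<lambda>p. {p}) ` N"
    then show "S \<in> {S. S \<subseteq> N \<and> S \<noteq> {}}" by auto
  qed
  also have "(\<Sum>S\<in>P2 \<union> (\<lambda>p. {p}) ` N. h S) = (\<Sum>S\<in>P2. h S) + (\<Sum>S\<in>(\<lambda>p. {p}) ` N. h S)"
  proof (rule sum.union_disjoint)
    show "finite P2" unfolding P2_def using finN by auto
    show "finite ((\<lambda>p. {p}) ` N)" using finN by auto
    show "P2 \<inter> (\<lambda>p. {p}) ` N = {}" unfolding P2_def by auto
  qed
  also have "(\<Sum>S\<in>(\<lambda>p. {p}) ` N. h S) = (\<Sum>p\<in>N. h {p})"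
    by (rule sum.reindex_cong[of "\<lambda>p. {p}"]) (auto simp: inj_on_def)
  also have "\<dots> = (\<Sum>p\<in>N. mult G u p * num_spanning_trees (delete_vertex G u))"
    unfolding h_def identify_single by simp
  also have "\<dots> = (\<Sum>p\<in>N. mult G u p) * num_spanning_trees (delete_vertex G u)"
    by (simp add: sum_distrib_right)
  finally show ?thesis unfolding N_def P2_def h_def by simp
qed

end
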